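(* For every $n \geq 1$, $c(\Gamma_n) \geq \left\lfloor \frac{n+5}{6} \right\rfloor$ and $c(\Lambda_n) \geq \left\lfloor \frac{n+5}{6} \right\rfloor$.
   Context: The Fibonacci cube $\Gamma_n$ is the subgraph of the hypercube $Q_n$ (vertex set $\{0,1\}^n$, adjacency = differing in exactly one position) induced by all binary strings of length $n$ containing no two consecutive 1's. The Lucas cube $\Lambda_n$ is the subgraph of $Q_n$ induced by all binary strings $x_1\cdots x_n$ with no two consecutive 1's and not having both $x_1 = 1$ and $x_n = 1$. Cops and Robbers: $k$ cops choose starting vertices, then the robber does; in each round all cops move (to a neighbor or stay), then the robber moves (to a neighbor or stays); cops win if some cop occupies the robber's vertex. The cop number $c(G)$ is the minimum $k$ for which the cops can guarantee capture. *)

theory Defs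
  imports Main
begin

definition hamming1 :: "bool list \<Rightarrow> bool list \<Rightarrow> bool" where
  "hamming1 x y \<longleftrightarrow> length x = length y \<and> card {i. i < length x \<and> x ! i \<noteq> y ! i} = 1"

definition induced_cube_adj :: "bool list set \<Rightarrow> bool list \<Rightarrow> bool list \<Rightarrow> bool" where
  "induced_cube_adj V x y \<longleftrightarrow> x \<in> V \<and> y \<in> V \<and> hamming1 x y"

definition fib_vertices :: "nat \<Rightarrow> bool list set" where
  "fib_vertices n = {x. length x = n \<and> (\<forall>i. i + 1 < n \<longrightarrow> \<not> (x ! i \<and> x ! (i + 1)))}"

definition lucas_vertices :: "nat \<Rightarrow> bool list set" where
  "lucas_vertices n = {x. x \<in> fib_vertices n \<and> \<not> (x ! 0 \<and> x ! (n - 1))}"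

text \<open>cops_win_from E C r: it is the cops' turn to move, the cops stand at C
  (one list entry per cop), the robber at r; the cops can force a capture in
  finitely many rounds.\<close>
inductive cops_win_from :: "('a \<Rightarrow> 'a \<Rightarrow> bool) \<Rightarrow> 'a list \<Rightarrow> 'a \<Rightarrow> bool"
  for E :: "'a \<Rightarrow> 'a \<Rightarrow> bool" where
  caught: "r \<in> set C \<Longrightarrow> cops_win_from E C r"
| move: "list_all2 (\<lambda>c c'. c' = c \<or> E c c') C C' \<Longrightarrow>
         (r \<in> set C' \<or> (\<forall>r'. (r' = r \<or> E r r') \<longrightarrow> cops_win_from E C' r')) \<Longrightarrow>
         cops_win_from E C r"

definition cops_win :: "'a set \<Rightarrow> ('a \<Rightarrow> 'a \<Rightarrow> bool) \<Rightarrow> nat \<Rightarrow> bool" where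
  "cops_win V E k \<longleftrightarrow> (\<exists>C. length C = k \<and> set C \<subseteq> V \<and> (\<forall>r\<in>V. cops_win_from E C r))"

definition cop_number :: "'a set \<Rightarrow> ('a \<Rightarrow> 'a \<Rightarrow> bool) \<Rightarrow> nat" where
  "cop_number V E = (LEAST k. cops_win V E k)"

end

theory Submission
  imports Defs
begin

definition hdist :: "bool list \<Rightarrow> bool list \<Rightarrow> nat" where
  "hdist x y = card {i. i < length x \<and> x ! i \<noteq> y ! i}"

definition PP :: "nat \<Rightarrow> nat set" where
  "PP n = (\<lambda>i. 2 * i) ` {..<n div 2}"

definition SS :: "nat \<Rightarrow> bool list set" where
  "SS n = {x. length x = n \<and> (\<forall>i<n. x ! i \<longrightarrow> i \<in> PP n)}"

lemma card_PP: "card (PP n) = n div 2"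
  unfolding PP_def by (subst card_image) (auto simp: inj_on_def)

lemma PP_bound: "i \<in> PP n \<Longrightarrow> even i \<and> i + 1 < n"
  unfolding PP_def by auto

lemma hdist_self: "hdist x x = 0"
  unfolding hdist_def by simp

lemma escape:
  assumes v: "v \<in> SS n"
    and cs: "\<forall>c\<in>set C'. length c = n \<and> c \<noteq> v"
    and len: "length C' = k"
    and kd: "k \<ge> 1 \<Longrightarrow> 2 * k < n div 2"
  shows "\<exists>u \<in> SS n. (u = v \<or> hamming1 v u) \<and> (\<forall>c\<in>set C'. 2 \<le> hdist u c)"
proof (cases "\<forall>c\<in>set C'. 2 \<le> hdist v c")
  case True
  then show ?thesis using v by blast
next
  case False
  then have "C' \<noteq> []" by auto
  then have "k \<ge> 1" using len by (cases C') auto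
  then have kd': "2 * k < card (PP n)" using kd card_PP by simp
  have lv: "length v = n" using v by (simp add: SS_def)
  define D where "D c = {i. i < n \<and> v ! i \<noteq> c ! i}" for c
  have finD: "finite (D c)" for c unfolding D_def by simp
  define B where "B = (\<Union>c\<in>set C'. (if card (D c) \<le> 2 then D c else {}))"
  have "card B \<le> (\<Sum>c\<in>set C'. card (if card (D c) \<le> 2 then D c else {}))"
    unfolding B_def by (rule card_UN_le) simp
  also have "\<dots> \<le> card (set C') * 2"
    using sum_bounded_above[of "set C'" "\<lambda>c. card (if card (D c) \<le> 2 then D c else {})" 2]
    by auto
  also have "\<dots> \<le> k * 2" using card_length[of C'] len by simp
  finally have cB: "card B < card (PP n)" using kd' by simp
  have finB: "finite B" unfolding B_def using finD by auto
  have "\<not> PP n \<subseteq> B"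
  proof
    assume "PP n \<subseteq> B"
    then have "card (PP n) \<le> card B" using finB by (rule card_mono[rotated])
    then show False using cB by simp
  qed
  then obtain j where jP: "j \<in> PP n" and jB: "j \<notin> B" by blast
  have jn: "j < n" using PP_bound[OF jP] by simp
  define u where "u = v[j := \<not> v ! j]"
  have lu: "length u = n" using lv by (simp add: u_def)
  have un: "u ! i = (if i = j then \<not> v ! j else v ! i)" if "i < n" for i
    using that lv by (simp add: u_def)
  have uS: "u \<in> SS n"
    using v jP un lu by (auto simp: SS_def)
  have "{i. i < length v \<and> v ! i \<noteq> u ! i} = {j}"
    using un jn lv by (auto split: if_splits)
  then have h1: "hamming1 v u" using lu lv by (simp add: hamming1_def)
  have far: "2 \<le> hdist u c" if cC: "c \<in> set C'" for c
  proof -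
    have lc: "length c = n" and cv: "c \<noteq> v" using cs cC by auto
    have Dne: "D c \<noteq> {}"
    proof
      assume "D c = {}"
      then have "c = v" using lc lv by (auto simp: D_def intro: nth_equalityI)
      then show False using cv by simp
    qed
    define Du where "Du = {i. i < length u \<and> u ! i \<noteq> c ! i}"
    have hu: "hdist u c = card Du" unfolding hdist_def Du_def by simp
    show ?thesis
    proof (cases "card (D c) \<le> 2")
      case True
      then have "j \<notin> D c" using jB cC unfolding B_def by auto
      then have "Du = insert j (D c)"
        using un jn lu by (auto simp: Du_def D_def split: if_splits)
      then have "card Du = Suc (card (D c))" using finD \<open>j \<notin> D c\<close> by simp
      moreover have "card (D c) \<ge> 1" using Dne finD by (simp add: Suc_le_eq card_gt_0_iff)
      ultimately show ?thesis using hu by simp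
    next
      case False
      have "D c - {j} \<subseteq> Du" using un lu by (auto simp: Du_def D_def split: if_splits)
      then have "card (D c - {j}) \<le> card Du" by (rule card_mono[rotated]) (simp add: Du_def)
      moreover have "card (D c - {j}) \<ge> card (D c) - 1"
        using finD by (simp add: card_Diff_singleton_if)
      ultimately show ?thesis using hu False by simp
    qed
  qed
  show ?thesis using uS h1 far by blast
qed


lemma hdist_zero:
  assumes "length x = length y" "hdist x y = 0" shows "x = y"
proof -
  have "{i. i < length x \<and> x ! i \<noteq> y ! i} = {}"
    using assms(2) unfolding hdist_def by simp
  then show ?thesis using assms(1) by (auto intro: nth_equalityI)
qed

lemma hamming1_sym: "hamming1 x y \<Longrightarrow> hamming1 y x"
proof -
  assume h: "hamming1 x y"
  then have l: "length x = length y" by (simp add: hamming1_def)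
  have "{i. i < length y \<and> y ! i \<noteq> x ! i} = {i. i < length x \<and> x ! i \<noteq> y ! i}"
    using l by auto
  then show ?thesis using h l by (simp add: hamming1_def)
qed

lemma robber:
  assumes "cops_win_from (induced_cube_adj V) C r"
    and SV: "SS n \<subseteq> V" and Vl: "\<forall>x\<in>V. length x = n"
    and kd: "k \<ge> 1 \<Longrightarrow> 2 * k < n div 2"
  shows "length C = k \<Longrightarrow> set C \<subseteq> V \<Longrightarrow> r \<in> SS n \<Longrightarrow> \<forall>c\<in>set C. 2 \<le> hdist r c \<Longrightarrow> False"
  using assms(1)
proof (induction rule: cops_win_from.induct)
  case (caught r C)
  then show ?case using hdist_self by fastforce
next
  case (move C C' r)
  have lenC': "length C' = k" using move.hyps(1) move.prems(1) by (simp add: list_all2_lengthD)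
  have stepC: "\<forall>c'\<in>set C'. \<exists>c\<in>set C. c' = c \<or> induced_cube_adj V c c'"
  proof
    fix c' assume "c' \<in> set C'"
    then obtain i where i: "i < length C'" "C' ! i = c'" by (auto simp: in_set_conv_nth)
    have "length C = length C'" using move.hyps(1) by (simp add: list_all2_lengthD)
    then have "C ! i \<in> set C" using i by simp
    moreover have "c' = C ! i \<or> induced_cube_adj V (C ! i) c'"
      using move.hyps(1) i by (auto simp: list_all2_conv_all_nth)
    ultimately show "\<exists>c\<in>set C. c' = c \<or> induced_cube_adj V c c'" by blast
  qed
  have C'V: "set C' \<subseteq> V"
    using stepC move.prems(2) by (auto simp: induced_cube_adj_def)
  have lr: "length r = n" using move.prems(3) by (simp add: SS_def)
  have rV: "r \<in> V" using move.prems(3) SV by auto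
  have notr: "\<forall>c'\<in>set C'. length c' = n \<and> c' \<noteq> r"
  proof
    fix c' assume c': "c' \<in> set C'"
    have "length c' = n" using c' C'V Vl by auto
    moreover have "c' \<noteq> r"
    proof
      assume eq: "c' = r"
      obtain c where c: "c \<in> set C" "c' = c \<or> induced_cube_adj V c c'" using stepC c' by blast
      have lc: "length c = n" using c(1) move.prems(2) Vl by auto
      have h2: "2 \<le> hdist r c" using c(1) move.prems(4) by auto
      show False
      proof (cases "c' = c")
        case True then show False using h2 eq hdist_self by simp
      next
        case False
        then have "hamming1 c r" using c(2) eq by (simp add: induced_cube_adj_def)
        then have "hamming1 r c" by (rule hamming1_sym)
        then have "hdist r c = 1" unfolding hamming1_def hdist_def by (elim conjE) simp
        then show False using h2 by simp
      qed
    qed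
    ultimately show "length c' = n \<and> c' \<noteq> r" by simp
  qed
  then have "r \<notin> set C'" by auto
  then have all: "\<forall>r'. (r' = r \<or> induced_cube_adj V r r') \<longrightarrow>
      (cops_win_from (induced_cube_adj V) C' r' \<and>
       (length C' = k \<longrightarrow> set C' \<subseteq> V \<longrightarrow> r' \<in> SS n \<longrightarrow> (\<forall>c\<in>set C'. 2 \<le> hdist r' c) \<longrightarrow> False))"
    using move.IH by blast
  obtain u where u: "u \<in> SS n" "u = r \<or> hamming1 r u" "\<forall>c\<in>set C'. 2 \<le> hdist u c"
    using escape[OF move.prems(3) notr lenC' kd] by blast
  have "u = r \<or> induced_cube_adj V r u"
    using u SV rV by (auto simp: induced_cube_adj_def)
  then show False using all u lenC' C'V by blast
qed


lemma start:
  assumes lenC: "length C = k" and Cl: "\<forall>c\<in>set C. length c = n"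
    and kd: "k \<ge> 1 \<Longrightarrow> 2 * k < n div 2"
  shows "\<exists>v\<in>SS n. \<forall>c\<in>set C. 2 \<le> hdist v c"
proof -
  define v where "v = map (\<lambda>p. if even p \<and> p div 2 < 2 * k then \<not> (C ! (p div 4)) ! p else False) [0..<n]"
  have lv: "length v = n" by (simp add: v_def)
  have vn: "v ! p = (if even p \<and> p div 2 < 2 * k then \<not> (C ! (p div 4)) ! p else False)" if "p < n" for p
    using that by (simp add: v_def)
  have vS: "v \<in> SS n"
  proof -
    have "i \<in> PP n" if "i < n" "v ! i" for i
    proof -
      have "even i" "i div 2 < 2 * k" using that vn by (auto split: if_splits)
      then have "k \<ge> 1" by simp
      then have "i div 2 < n div 2" using kd \<open>i div 2 < 2 * k\<close> by simp
      moreover have "i = 2 * (i div 2)" using \<open>even i\<close> by simp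
      ultimately show ?thesis unfolding PP_def by blast
    qed
    then show ?thesis using lv by (simp add: SS_def)
  qed
  have far: "2 \<le> hdist v c" if cC: "c \<in> set C" for c
  proof -
    obtain i where i: "i < k" "C ! i = c" using cC lenC by (auto simp: in_set_conv_nth)
    have k1: "k \<ge> 1" using i by simp
    have b: "4 * i + 2 < n" using kd[OF k1] i(1) by linarith
    have d4: "(4 * i) div 4 = i" "(4 * i + 2) div 4 = i" by simp_all
    have e1: "v ! (4 * i) \<noteq> c ! (4 * i)"
      using vn[of "4 * i"] b i d4 by simp
    have e2: "v ! (4 * i + 2) \<noteq> c ! (4 * i + 2)"
      using vn[of "4 * i + 2"] b i d4 by simp
    have "{4 * i, 4 * i + 2} \<subseteq> {j. j < length v \<and> v ! j \<noteq> c ! j}"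
      using e1 e2 b lv by auto
    then have "card {4 * i, 4 * i + 2} \<le> hdist v c"
      unfolding hdist_def by (rule card_mono[rotated]) simp
    then show ?thesis by simp
  qed
  show ?thesis using vS far by blast
qed

lemma no_win:
  assumes SV: "SS n \<subseteq> V" and Vl: "\<forall>x\<in>V. length x = n"
    and kd: "k \<ge> 1 \<Longrightarrow> 2 * k < n div 2"
  shows "\<not> cops_win V (induced_cube_adj V) k"
proof
  assume "cops_win V (induced_cube_adj V) k"
  then obtain C where C: "length C = k" "set C \<subseteq> V" "\<forall>r\<in>V. cops_win_from (induced_cube_adj V) C r"
    unfolding cops_win_def by blast
  have "\<forall>c\<in>set C. length c = n" using C(2) Vl by auto
  then obtain v where v: "v \<in> SS n" "\<forall>c\<in>set C. 2 \<le> hdist v c"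
    using start[OF C(1) _ kd] by blast
  have "cops_win_from (induced_cube_adj V) C v" using C(3) v(1) SV by auto
  then show False using robber[OF _ SV Vl kd C(1) C(2) v(1) v(2)] by blast
qed

lemma some_win:
  assumes Vl: "\<forall>x\<in>V. length x = (n::nat)"
  shows "cops_win V (induced_cube_adj V) (card V)"
proof -
  have "V \<subseteq> {xs. set xs \<subseteq> UNIV \<and> length xs = n}" using Vl by auto
  moreover have "finite {xs. set xs \<subseteq> (UNIV :: bool set) \<and> length xs = n}"
    by (rule finite_lists_length_eq) simp
  ultimately have "finite V" by (rule finite_subset)
  then obtain xs where xs: "set xs = V" "distinct xs" using finite_distinct_list by blast
  then have "length xs = card V" using distinct_card by fastforce
  then show ?thesis unfolding cops_win_def using xs
    by (intro exI[of _ xs]) (auto intro: cops_win_from.caught)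
qed

lemma bound:
  assumes SV: "SS n \<subseteq> V" and Vl: "\<forall>x\<in>V. length x = n"
  shows "cop_number V (induced_cube_adj V) \<ge> (n + 5) div 6"
proof (rule ccontr)
  assume "\<not> ?thesis"
  then have lt: "cop_number V (induced_cube_adj V) < (n + 5) div 6" by simp
  have w: "cops_win V (induced_cube_adj V) (cop_number V (induced_cube_adj V))"
    unfolding cop_number_def using some_win[OF Vl] by (rule LeastI)
  have "cop_number V (induced_cube_adj V) \<ge> 1 \<Longrightarrow> 2 * cop_number V (induced_cube_adj V) < n div 2"
    using lt by linarith
  then show False using no_win[OF SV Vl] w by blast
qed

lemma SS_lucas: "n \<ge> 1 \<Longrightarrow> SS n \<subseteq> lucas_vertices n"
proof
  fix x assume n: "n \<ge> 1" and x: "x \<in> SS n"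
  have lx: "length x = n" and P: "\<forall>i<n. x ! i \<longrightarrow> i \<in> PP n" using x by (auto simp: SS_def)
  have "\<not> (x ! i \<and> x ! (i + 1))" if "i + 1 < n" for i
  proof
    assume "x ! i \<and> x ! (i + 1)"
    then have "i \<in> PP n" "i + 1 \<in> PP n" using P that by auto
    then have "even i" "even (i + 1)" using PP_bound by blast+
    then show False by simp
  qed
  moreover have "\<not> (x ! 0 \<and> x ! (n - 1))"
  proof
    assume "x ! 0 \<and> x ! (n - 1)"
    then have "n - 1 \<in> PP n" using P n by auto
    then show False using PP_bound by fastforce
  qed
  ultimately show "x \<in> lucas_vertices n" using lx by (simp add: lucas_vertices_def fib_vertices_def)
qed

theorem corollary3p3:
  fixes n :: nat
  assumes "n \<ge> 1"
  shows "cop_number (fib_vertices n) (induced_cube_adj (fib_vertices n)) \<ge> (n + 5) div 6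
       \<and> cop_number (lucas_vertices n) (induced_cube_adj (lucas_vertices n)) \<ge> (n + 5) div 6"
proof
  have L: "SS n \<subseteq> lucas_vertices n" using SS_lucas assms .
  have F: "SS n \<subseteq> fib_vertices n" using L by (auto simp: lucas_vertices_def)
  show "cop_number (fib_vertices n) (induced_cube_adj (fib_vertices n)) \<ge> (n + 5) div 6"
    by (rule bound[OF F]) (simp add: fib_vertices_def)
  show "cop_number (lucas_vertices n) (induced_cube_adj (lucas_vertices n)) \<ge> (n + 5) div 6"
    by (rule bound[OF L]) (simp add: lucas_vertices_def fib_vertices_def)
qed

end
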